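(* Let $S$ be a topological space and let $I\subseteq \mathscr{C}(S)[x_1,\dots,x_n]$ be an ideal. Then for every open set $U\subseteq S$ we have $IV(I)(U)=FRad(I)(U)$, i.e. $IV(I)=FRad(I)$ as presheaves on $S$.
   Context: For a subset $U\subseteq S$, $\mathscr{C}(U)$ is the ring of continuous complex-valued functions on $U$, and $\mathscr{C}[x_1,\dots,x_n](U):=\mathscr{C}(U)[x_1,\dots,x_n]$. For $f=\sum_\alpha a_\alpha x^\alpha\in \mathscr{C}[x_1,\dots,x_n](U)$ and $s\in U$, write $f_s=\sum_\alpha a_\alpha(s)x^\alpha\in\mathbb{C}[x_1,\dots,x_n]$. For the ideal $I$ of global sections, $I(U)$ denotes the ideal of $\mathscr{C}[x_1,\dots,x_n](U)$ generated by the restrictions $f|_U$, $f\in I$, and $I(U)|_s=\{g_s : g\in I(U)\}$. Define $V(I)(U)=\{(s,x)\in U\times\mathbb{C}^n : g_s(x)=0 \text{ for all } g\in I(U)\}$, $IV(I)(U)=\{f\in \mathscr{C}[x_1,\dots,x_n](U) : f_s(x)=0 \text{ for all }(s,x)\in V(I)(U)\}$, and the fibrewise radical $FRad(I)(U)=\{f\in \mathscr{C}[x_1,\dots,x_n](U): f_s\in\sqrt{I(U)|_s}\text{ for all } s\in U\}$, where $\sqrt{\cdot}$ is the usual radical in $\mathbb{C}[x_1,\dots,x_n]$. *)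

theory Defs
  imports "HOL-Analysis.Analysis" "HOL-Library.Poly_Mapping" "HOL-Library.Function_Algebras"
begin

text \<open>Polynomials over \<open>C(U)\<close> have coefficients
  \<open>'a \<Rightarrow> complex\<close> (pointwise ring structure), continuous on U and normalised to vanish
  outside U, so that they represent functions on U faithfully.\<close>

type_synonym 'c mpoly = "(nat \<Rightarrow>\<^sub>0 nat) \<Rightarrow>\<^sub>0 'c"

definition in_vars :: "nat \<Rightarrow> ('c::zero) mpoly \<Rightarrow> bool" where
  "in_vars n p \<longleftrightarrow> (\<forall>m \<in> Poly_Mapping.keys p. Poly_Mapping.keys m \<subseteq> {..<(n::nat)})"

definition CX :: "nat \<Rightarrow> 'a::topological_space set \<Rightarrow> ('a \<Rightarrow> complex) mpoly set" where
  "CX n U = {p. in_vars n p \<and>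
      (\<forall>\<alpha>. continuous_on U (Poly_Mapping.lookup p \<alpha>) \<and> (\<forall>s. s \<notin> U \<longrightarrow> Poly_Mapping.lookup p \<alpha> s = 0))}"

definition is_ideal :: "nat \<Rightarrow> ('a::topological_space \<Rightarrow> complex) mpoly set \<Rightarrow> bool" where
  "is_ideal n I \<longleftrightarrow> I \<subseteq> CX n UNIV \<and> 0 \<in> I \<and> (\<forall>f\<in>I. \<forall>g\<in>I. f + g \<in> I)
      \<and> (\<forall>h\<in>CX n UNIV. \<forall>f\<in>I. h * f \<in> I)"

definition restr :: "'a set \<Rightarrow> ('a \<Rightarrow> complex) mpoly \<Rightarrow> ('a \<Rightarrow> complex) mpoly" where
  "restr U f = Poly_Mapping.map (\<lambda>c s. if s \<in> U then c s else 0) f"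

definition fib :: "'a \<Rightarrow> ('a \<Rightarrow> complex) mpoly \<Rightarrow> complex mpoly" where
  "fib s f = Poly_Mapping.map (\<lambda>c. c s) f"

definition peval :: "complex mpoly \<Rightarrow> (nat \<Rightarrow> complex) \<Rightarrow> complex" where
  "peval p x = (\<Sum>\<alpha>\<in>Poly_Mapping.keys p. Poly_Mapping.lookup p \<alpha> * (\<Prod>i\<in>Poly_Mapping.keys \<alpha>. x i ^ Poly_Mapping.lookup \<alpha> i))"

text \<open>points of \<open>\<complex>^n\<close>, as sequences vanishing from index n on\<close>
definition pts :: "nat \<Rightarrow> (nat \<Rightarrow> complex) set" where
  "pts n = {x. \<forall>i\<ge>n. x i = 0}"

definition ideal_on :: "nat \<Rightarrow> ('a::topological_space \<Rightarrow> complex) mpoly set \<Rightarrow> 'a set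
    \<Rightarrow> ('a \<Rightarrow> complex) mpoly set" where
  "ideal_on n I U = {g. \<exists>(k::nat) h f. (\<forall>i<k. h i \<in> CX n U \<and> f i \<in> I) \<and>
      g = (\<Sum>i<k. h i * restr U (f i))}"

definition V_on :: "nat \<Rightarrow> ('a::topological_space \<Rightarrow> complex) mpoly set \<Rightarrow> 'a set
    \<Rightarrow> ('a \<times> (nat \<Rightarrow> complex)) set" where
  "V_on n I U = {(s, x). s \<in> U \<and> x \<in> pts n \<and> (\<forall>g\<in>ideal_on n I U. peval (fib s g) x = 0)}"

definition IV_on :: "nat \<Rightarrow> ('a::topological_space \<Rightarrow> complex) mpoly set \<Rightarrow> 'a set
    \<Rightarrow> ('a \<Rightarrow> complex) mpoly set" where
  "IV_on n I U = {f \<in> CX n U. \<forall>(s, x)\<in>V_on n I U. peval (fib s f) x = 0}"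

definition crad :: "complex mpoly set \<Rightarrow> complex mpoly set" where
  "crad J = {q. \<exists>m\<ge>1. q ^ m \<in> J}"

definition FRad_on :: "nat \<Rightarrow> ('a::topological_space \<Rightarrow> complex) mpoly set \<Rightarrow> 'a set
    \<Rightarrow> ('a \<Rightarrow> complex) mpoly set" where
  "FRad_on n I U = {f \<in> CX n U. \<forall>s\<in>U. fib s f \<in> crad (fib s ` ideal_on n I U)}"

end

theory Submission
  imports Defs "HOL-Computational_Algebra.Fundamental_Theorem_Algebra" "HOL-Library.Countable_Set"
begin

lemma pm_sum_single:
  assumes "finite A" "Poly_Mapping.keys p \<subseteq> A"
  shows "p = (\<Sum>a\<in>A. Poly_Mapping.single a (Poly_Mapping.lookup p a))"
proof (rule poly_mapping_eqI)
  fix k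
  have "(\<Sum>a\<in>A. Poly_Mapping.lookup (Poly_Mapping.single a (Poly_Mapping.lookup p a)) k)
      = (\<Sum>a\<in>A. if a = k then Poly_Mapping.lookup p a else 0)"
    by (intro sum.cong) (auto simp: lookup_single when_def)
  also have "\<dots> = Poly_Mapping.lookup p k"
    using assms by (auto simp: sum.delta' in_keys_iff)
  finally show "Poly_Mapping.lookup p k = Poly_Mapping.lookup (\<Sum>a\<in>A. Poly_Mapping.single a (Poly_Mapping.lookup p a)) k"
    by (simp add: lookup_sum)
qed

lemma lookup_mult_fin:
  fixes p q :: "'a::comm_monoid_add \<Rightarrow>\<^sub>0 'b::comm_semiring_1"
  assumes "finite A" "Poly_Mapping.keys p \<subseteq> A" "finite B" "Poly_Mapping.keys q \<subseteq> B"
  shows "Poly_Mapping.lookup (p * q) k =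
    (\<Sum>a\<in>A. \<Sum>b\<in>B. if k = a + b then Poly_Mapping.lookup p a * Poly_Mapping.lookup q b else 0)"
proof -
  have "p * q = (\<Sum>a\<in>A. Poly_Mapping.single a (Poly_Mapping.lookup p a)) *
     (\<Sum>b\<in>B. Poly_Mapping.single b (Poly_Mapping.lookup q b))"
    using pm_sum_single[OF assms(1,2)] pm_sum_single[OF assms(3,4)] by simp
  also have "\<dots> = (\<Sum>a\<in>A. \<Sum>b\<in>B. Poly_Mapping.single (a+b) (Poly_Mapping.lookup p a * Poly_Mapping.lookup q b))"
    by (simp add: sum_product mult_single)
  finally show ?thesis
    by (simp add: lookup_sum lookup_single when_def eq_commute)
qed


lemma lookup_fib: "Poly_Mapping.lookup (fib s p) a = Poly_Mapping.lookup p a s"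
  by (auto simp: fib_def Poly_Mapping.map.rep_eq when_def)

lemma keys_fib: "Poly_Mapping.keys (fib s p) \<subseteq> Poly_Mapping.keys p"
  by (auto simp: in_keys_iff lookup_fib)

lemma fib_eqI: "(\<And>a. Poly_Mapping.lookup P a = Poly_Mapping.lookup p a s) \<Longrightarrow> fib s p = P"
  by (rule poly_mapping_eqI) (simp add: lookup_fib)

lemma fib_add: "fib s (p + q) = fib s p + fib s q"
  by (rule fib_eqI) (simp add: lookup_add lookup_fib)

lemma fib_zero [simp]: "fib s 0 = 0"
  by (rule fib_eqI) simp

lemma fib_minus: "fib s (- p) = - fib s p"
  by (rule fib_eqI) (simp add: lookup_fib)

lemma fib_diff: "fib s (p - q) = fib s p - fib s q"
  by (rule fib_eqI) (simp add: lookup_minus lookup_fib)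

lemma fib_single [simp]: "fib s (Poly_Mapping.single a c) = Poly_Mapping.single a (c s)"
  by (rule fib_eqI) (simp add: lookup_single when_def)

lemma fib_one [simp]: "fib s 1 = 1"
  by (rule fib_eqI) (simp add: lookup_one when_def)

lemma sum_apply: "(\<Sum>i\<in>A. f i) x = (\<Sum>i\<in>A. f i x)"
  by (induction A rule: infinite_finite_induct) auto

lemma fib_mult: "fib s (p * q) = fib s p * fib s q"
proof (rule fib_eqI)
  fix k
  have f: "finite (Poly_Mapping.keys p)" "finite (Poly_Mapping.keys q)" by auto
  have "Poly_Mapping.lookup (fib s p * fib s q) k =
    (\<Sum>a\<in>Poly_Mapping.keys p. \<Sum>b\<in>Poly_Mapping.keys q. if k = a + b then Poly_Mapping.lookup (fib s p) a * Poly_Mapping.lookup (fib s q) b else 0)"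
    by (rule lookup_mult_fin) (use f keys_fib[of s p] keys_fib[of s q] in auto)
  moreover have "Poly_Mapping.lookup (p * q) k =
    (\<Sum>a\<in>Poly_Mapping.keys p. \<Sum>b\<in>Poly_Mapping.keys q. if k = a + b then Poly_Mapping.lookup p a * Poly_Mapping.lookup q b else 0)"
    by (rule lookup_mult_fin) (use f in auto)
  ultimately show "Poly_Mapping.lookup (fib s p * fib s q) k = Poly_Mapping.lookup (p * q) k s"
    by (simp add: lookup_fib sum_apply) (intro sum.cong refl, auto simp: lookup_fib)
qed

lemma fib_sum: "fib s (\<Sum>i\<in>A. f i) = (\<Sum>i\<in>A. fib s (f i))"
  by (induction A rule: infinite_finite_induct) (auto simp: fib_add)

lemma fib_power: "fib s (p ^ m) = fib s p ^ m"
  by (induction m) (auto simp: fib_mult)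

definition mon :: "(nat \<Rightarrow>\<^sub>0 nat) \<Rightarrow> (nat \<Rightarrow> complex) \<Rightarrow> complex" where
  "mon a x = (\<Prod>i\<in>Poly_Mapping.keys a. x i ^ Poly_Mapping.lookup a i)"

lemma mon_superset: "finite K \<Longrightarrow> Poly_Mapping.keys a \<subseteq> K \<Longrightarrow>
   mon a x = (\<Prod>i\<in>K. x i ^ Poly_Mapping.lookup a i)"
  unfolding mon_def by (rule prod.mono_neutral_left) (auto simp: in_keys_iff)

lemma mon_add: "mon (a + b) x = mon a x * mon b x"
proof -
  let ?K = "Poly_Mapping.keys a \<union> Poly_Mapping.keys b"
  have "mon (a + b) x = (\<Prod>i\<in>?K. x i ^ Poly_Mapping.lookup (a + b) i)"
    by (rule mon_superset) (auto dest: set_mp[OF keys_add])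
  also have "\<dots> = (\<Prod>i\<in>?K. x i ^ Poly_Mapping.lookup a i) * (\<Prod>i\<in>?K. x i ^ Poly_Mapping.lookup b i)"
    by (simp add: lookup_add power_add prod.distrib)
  also have "\<dots> = mon a x * mon b x"
    using mon_superset[of ?K a x] mon_superset[of ?K b x] by simp
  finally show ?thesis .
qed

lemma mon_zero [simp]: "mon 0 x = 1"
  by (simp add: mon_def)

lemma peval_mon: "peval p x = (\<Sum>a\<in>Poly_Mapping.keys p. Poly_Mapping.lookup p a * mon a x)"
  by (simp add: peval_def mon_def)

lemma peval_superset: "finite A \<Longrightarrow> Poly_Mapping.keys p \<subseteq> A \<Longrightarrow>
   peval p x = (\<Sum>a\<in>A. Poly_Mapping.lookup p a * mon a x)"
  unfolding peval_mon by (rule sum.mono_neutral_left) (auto simp: in_keys_iff)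

lemma peval_add: "peval (p + q) x = peval p x + peval q x"
proof -
  let ?K = "Poly_Mapping.keys p \<union> Poly_Mapping.keys q"
  have "peval (p + q) x = (\<Sum>a\<in>?K. Poly_Mapping.lookup (p + q) a * mon a x)"
    by (rule peval_superset) (auto dest: set_mp[OF keys_add])
  also have "\<dots> = (\<Sum>a\<in>?K. Poly_Mapping.lookup p a * mon a x) + (\<Sum>a\<in>?K. Poly_Mapping.lookup q a * mon a x)"
    by (simp add: lookup_add distrib_right sum.distrib)
  also have "\<dots> = peval p x + peval q x"
    using peval_superset[of ?K p x] peval_superset[of ?K q x] by simp
  finally show ?thesis .
qed

lemma peval_zero [simp]: "peval 0 x = 0"
  by (simp add: peval_def)

lemma peval_minus: "peval (- p) x = - peval p x"
proof -
  have "peval p x + peval (- p) x = 0" using peval_add[of p "- p" x] by simp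
  thus ?thesis by (simp add: eq_neg_iff_add_eq_0 add.commute)
qed

lemma peval_diff: "peval (p - q) x = peval p x - peval q x"
  using peval_add[of "p - q" q x] by simp

lemma peval_single [simp]: "peval (Poly_Mapping.single a c) x = c * mon a x"
  by (subst peval_superset[of "{a}"]) auto

lemma peval_one [simp]: "peval 1 x = 1"
  using peval_single[of 0 1 x] by (simp del: peval_single)

lemma peval_mult: "peval (p * q) x = peval p x * peval q x"
proof -
  define A where "A = Poly_Mapping.keys p"
  define B where "B = Poly_Mapping.keys q"
  define C where "C = (\<lambda>(a,b). a + b) ` (A \<times> B)"
  have fin: "finite A" "finite B" "finite C" by (auto simp: A_def B_def C_def)
  have kC: "Poly_Mapping.keys (p * q) \<subseteq> C"
    using keys_mult[of p q] by (auto simp: C_def A_def B_def)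
  have "peval (p * q) x = (\<Sum>k\<in>C. Poly_Mapping.lookup (p * q) k * mon k x)"
    by (rule peval_superset[OF fin(3) kC])
  also have "\<dots> = (\<Sum>k\<in>C. (\<Sum>a\<in>A. \<Sum>b\<in>B. if k = a + b then Poly_Mapping.lookup p a * Poly_Mapping.lookup q b else 0) * mon k x)"
    by (intro sum.cong refl, subst lookup_mult_fin[OF fin(1) _ fin(2)]) (auto simp: A_def B_def)
  also have "\<dots> = (\<Sum>k\<in>C. \<Sum>a\<in>A. \<Sum>b\<in>B. if k = a + b then Poly_Mapping.lookup p a * Poly_Mapping.lookup q b * mon k x else 0)"
    unfolding sum_distrib_right by (intro sum.cong refl) auto
  also have "\<dots> = (\<Sum>a\<in>A. \<Sum>b\<in>B. \<Sum>k\<in>C. if k = a + b then Poly_Mapping.lookup p a * Poly_Mapping.lookup q b * mon k x else 0)"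
    by (simp add: sum.swap[of _ C] sum.swap[of _ C B])
  also have "\<dots> = (\<Sum>a\<in>A. \<Sum>b\<in>B. Poly_Mapping.lookup p a * Poly_Mapping.lookup q b * mon (a + b) x)"
    by (intro sum.cong refl) (auto simp: sum.delta fin C_def)
  also have "\<dots> = (\<Sum>a\<in>A. Poly_Mapping.lookup p a * mon a x) * (\<Sum>b\<in>B. Poly_Mapping.lookup q b * mon b x)"
    by (simp add: sum_product mon_add mult_ac)
  also have "\<dots> = peval p x * peval q x"
    by (simp add: peval_mon A_def B_def)
  finally show ?thesis .
qed

lemma peval_power: "peval (p ^ m) x = peval p x ^ m"
  by (induction m) (auto simp: peval_mult)

lemma peval_sum: "peval (\<Sum>i\<in>A. f i) x = (\<Sum>i\<in>A. peval (f i) x)"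
  by (induction A rule: infinite_finite_induct) (auto simp: peval_add)

lemma peval_prod: "peval (\<Prod>i\<in>A. f i) x = (\<Prod>i\<in>A. peval (f i) x)"
  by (induction A rule: infinite_finite_induct) (auto simp: peval_mult)


definition cst :: "complex \<Rightarrow> complex mpoly" where "cst c = Poly_Mapping.single 0 c"
definition var :: "nat \<Rightarrow> complex mpoly" where "var i = Poly_Mapping.single (Poly_Mapping.single i 1) 1"

lemma in_vars_iff: "in_vars n p \<longleftrightarrow> Poly_Mapping.keys p \<subseteq> {m. Poly_Mapping.keys m \<subseteq> {..<n}}"
  by (auto simp: in_vars_def)

lemma in_vars_0 [simp]: "in_vars n (0::complex mpoly)" by (simp add: in_vars_def)
lemma in_vars_single: "Poly_Mapping.keys a \<subseteq> {..<n} \<Longrightarrow> in_vars n (Poly_Mapping.single a c)"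
  by (simp add: in_vars_def)
lemma in_vars_1 [simp]: "in_vars n (1::complex mpoly)"
  by (simp add: in_vars_def)
lemma in_vars_cst [simp]: "in_vars n (cst c)" by (simp add: cst_def in_vars_def)
lemma in_vars_var: "i < n \<Longrightarrow> in_vars n (var i)" by (simp add: var_def in_vars_def)
lemma in_vars_add: "in_vars n (p::complex mpoly) \<Longrightarrow> in_vars n q \<Longrightarrow> in_vars n (p + q)"
  unfolding in_vars_iff using keys_add[of p q] by blast
lemma in_vars_uminus: "in_vars n (p::complex mpoly) \<Longrightarrow> in_vars n (- p)"
  by (simp add: in_vars_def)
lemma in_vars_diff: "in_vars n (p::complex mpoly) \<Longrightarrow> in_vars n q \<Longrightarrow> in_vars n (p - q)"
  using in_vars_add[of n p "- q"] in_vars_uminus[of n q] by simp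
lemma in_vars_mult: "in_vars n (p::complex mpoly) \<Longrightarrow> in_vars n q \<Longrightarrow> in_vars n (p * q)"
  unfolding in_vars_iff
proof
  fix m assume p: "Poly_Mapping.keys p \<subseteq> {m. Poly_Mapping.keys m \<subseteq> {..<n}}"
    and q: "Poly_Mapping.keys q \<subseteq> {m. Poly_Mapping.keys m \<subseteq> {..<n}}"
    and m: "m \<in> Poly_Mapping.keys (p * q)"
  then obtain a b where "m = a + b" "a \<in> Poly_Mapping.keys p" "b \<in> Poly_Mapping.keys q"
    using keys_mult[of p q] by blast
  then show "m \<in> {m. Poly_Mapping.keys m \<subseteq> {..<n}}"
    using p q keys_add[of a b] by blast
qed
lemma in_vars_sum: "(\<And>i. i \<in> A \<Longrightarrow> in_vars n (f i :: complex mpoly)) \<Longrightarrow> in_vars n (\<Sum>i\<in>A. f i)"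
  by (induction A rule: infinite_finite_induct) (auto intro: in_vars_add)
lemma in_vars_prod: "(\<And>i. i \<in> A \<Longrightarrow> in_vars n (f i :: complex mpoly)) \<Longrightarrow> in_vars n (\<Prod>i\<in>A. f i)"
  by (induction A rule: infinite_finite_induct) (auto intro: in_vars_mult)
lemma in_vars_power: "in_vars n (p::complex mpoly) \<Longrightarrow> in_vars n (p ^ m)"
  by (induction m) (auto intro: in_vars_mult)

lemma cst_add: "cst (a + b) = cst a + cst b" by (simp add: cst_def single_add)
lemma cst_mult: "cst (a * b) = cst a * cst b" by (simp add: cst_def mult_single)
lemma cst_0 [simp]: "cst 0 = 0" by (simp add: cst_def)
lemma cst_1 [simp]: "cst 1 = 1" by (simp add: cst_def)
lemma cst_uminus: "cst (- a) = - cst a" by (simp add: cst_def single_uminus)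
lemma cst_diff: "cst (a - b) = cst a - cst b" by (simp add: cst_def single_diff)
lemma cst_prod: "cst (\<Prod>i\<in>A. f i) = (\<Prod>i\<in>A. cst (f i))"
  by (induction A rule: infinite_finite_induct) (auto simp: cst_mult)
lemma cst_sum: "cst (\<Sum>i\<in>A. f i) = (\<Sum>i\<in>A. cst (f i))"
  by (induction A rule: infinite_finite_induct) (auto simp: cst_add)
lemma cst_power: "cst (a ^ m) = cst a ^ m"
  by (induction m) (auto simp: cst_mult)
lemma peval_cst [simp]: "peval (cst c) x = c" by (simp add: cst_def)
lemma peval_var [simp]: "peval (var i) x = x i" by (simp add: var_def mon_def)

definition pideal :: "nat \<Rightarrow> complex mpoly set \<Rightarrow> bool" where
  "pideal n K \<longleftrightarrow> K \<subseteq> {p. in_vars n p} \<and> 0 \<in> K \<and> (\<forall>a\<in>K. \<forall>b\<in>K. a + b \<in> K)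
     \<and> (\<forall>r a. in_vars n r \<longrightarrow> a \<in> K \<longrightarrow> r * a \<in> K)"

lemma pidealD:
  assumes "pideal n K"
  shows "\<And>a. a \<in> K \<Longrightarrow> in_vars n a" "0 \<in> K" "\<And>a b. a \<in> K \<Longrightarrow> b \<in> K \<Longrightarrow> a + b \<in> K"
    "\<And>r a. in_vars n r \<Longrightarrow> a \<in> K \<Longrightarrow> r * a \<in> K"
  using assms unfolding pideal_def by blast+

lemma pideal_uminus: "pideal n K \<Longrightarrow> a \<in> K \<Longrightarrow> - a \<in> K"
  using pidealD(4)[of n K "- 1" a] by (simp add: in_vars_uminus)
lemma pideal_diff: "pideal n K \<Longrightarrow> a \<in> K \<Longrightarrow> b \<in> K \<Longrightarrow> a - b \<in> K"
  using pidealD(3)[of n K a "- b"] pideal_uminus[of n K b] by simp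
lemma pideal_mult_right: "pideal n K \<Longrightarrow> in_vars n r \<Longrightarrow> a \<in> K \<Longrightarrow> a * r \<in> K"
  using pidealD(4)[of n K r a] by (simp add: mult.commute)
lemma pideal_sum: "pideal n K \<Longrightarrow> (\<And>i. i \<in> A \<Longrightarrow> f i \<in> K) \<Longrightarrow> (\<Sum>i\<in>A. f i) \<in> K"
  by (induction A rule: infinite_finite_induct) (auto intro: pidealD)

lemma pideal_one: "pideal n K \<Longrightarrow> 1 \<in> K \<Longrightarrow> in_vars n r \<Longrightarrow> r \<in> K"
  using pidealD(4)[of n K r 1] by simp

lemma maximal_avoiding:
  assumes J: "pideal n J" and f: "in_vars n f" and nf: "\<forall>m. f ^ m \<notin> J"
  shows "\<exists>M. pideal n M \<and> J \<subseteq> M \<and> (\<forall>m. f ^ m \<notin> M) \<and>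
     (\<forall>K. pideal n K \<and> M \<subseteq> K \<and> (\<forall>m. f ^ m \<notin> K) \<longrightarrow> K = M)"
proof -
  define \<A> where "\<A> = {K. pideal n K \<and> J \<subseteq> K \<and> (\<forall>m. f ^ m \<notin> K)}"
  have "\<exists>M\<in>\<A>. \<forall>X\<in>\<A>. M \<subseteq> X \<longrightarrow> X = M"
  proof (rule subset_Zorn_nonempty)
    show "\<A> \<noteq> {}" using J nf by (auto simp: \<A>_def)
  next
    fix \<C> assume ne: "\<C> \<noteq> {}" and ch: "subset.chain \<A> \<C>"
    have sub: "\<C> \<subseteq> \<A>" and cmp: "\<And>X Y. X \<in> \<C> \<Longrightarrow> Y \<in> \<C> \<Longrightarrow> X \<subseteq> Y \<or> Y \<subseteq> X"
      using ch by (auto simp: subset_chain_def)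
    obtain X0 where X0: "X0 \<in> \<C>" using ne by blast
    have "pideal n (\<Union>\<C>)"
      unfolding pideal_def
    proof (intro conjI allI impI ballI)
      show "\<Union>\<C> \<subseteq> {p. in_vars n p}" using sub by (auto simp: \<A>_def pideal_def)
      show "0 \<in> \<Union>\<C>" using X0 sub by (auto simp: \<A>_def pideal_def)
    next
      fix a b assume "a \<in> \<Union>\<C>" "b \<in> \<Union>\<C>"
      then obtain X Y where XY: "X \<in> \<C>" "Y \<in> \<C>" "a \<in> X" "b \<in> Y" by blast
      show "a + b \<in> \<Union>\<C>"
      proof (cases "X \<subseteq> Y")
        case True
        then have "pideal n Y" using XY sub by (auto simp: \<A>_def)
        then show ?thesis using True XY by (auto dest: pidealD(3))
      next
        case False
        then have "Y \<subseteq> X" using cmp XY by blast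
        moreover have "pideal n X" using XY sub by (auto simp: \<A>_def)
        ultimately show ?thesis using XY by (auto dest: pidealD(3))
      qed
    next
      fix r a assume "in_vars n (r::complex mpoly)" "a \<in> \<Union>\<C>"
      then obtain X where "X \<in> \<C>" "a \<in> X" by blast
      moreover have "pideal n X" using calculation sub by (auto simp: \<A>_def)
      ultimately have "r * a \<in> X" using \<open>in_vars n r\<close> pidealD(4) by metis
      then show "r * a \<in> \<Union>\<C>" using \<open>X \<in> \<C>\<close> by blast
    qed
    moreover have "J \<subseteq> \<Union>\<C>" using X0 sub by (auto simp: \<A>_def)
    moreover have "\<forall>m. f ^ m \<notin> \<Union>\<C>" using sub by (auto simp: \<A>_def)
    ultimately show "\<Union>\<C> \<in> \<A>" by (simp add: \<A>_def)
  qed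
  then obtain M where M: "M \<in> \<A>" and mx: "\<forall>X\<in>\<A>. M \<subseteq> X \<longrightarrow> X = M" by blast
  have "pideal n M" "J \<subseteq> M" "\<forall>m. f ^ m \<notin> M" using M by (auto simp: \<A>_def)
  moreover have "\<forall>K. pideal n K \<and> M \<subseteq> K \<and> (\<forall>m. f ^ m \<notin> K) \<longrightarrow> K = M"
  proof (intro allI impI)
    fix K assume "pideal n K \<and> M \<subseteq> K \<and> (\<forall>m. f ^ m \<notin> K)"
    moreover then have "K \<in> \<A>" using \<open>J \<subseteq> M\<close> by (auto simp: \<A>_def)
    ultimately show "K = M" using mx by blast
  qed
  ultimately show ?thesis by blast
qed


definition hp :: "complex mpoly \<Rightarrow> complex poly \<Rightarrow> complex mpoly" where
  "hp X q = poly (map_poly cst q) X"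

lemma hp_0 [simp]: "hp X 0 = 0" by (simp add: hp_def)
lemma hp_pCons: "hp X (pCons a p) = cst a + X * hp X p"
  by (simp add: hp_def map_poly_pCons)
lemma hp_add: "hp X (p + q) = hp X p + hp X q"
  by (induction p q rule: poly_induct2) (simp_all add: hp_pCons cst_add algebra_simps)
lemma hp_smult: "hp X (smult a q) = cst a * hp X q"
  by (induction q) (simp_all add: hp_pCons cst_mult algebra_simps)
lemma hp_mult: "hp X (p * q) = hp X p * hp X q"
  by (induction p) (simp_all add: hp_pCons hp_add hp_smult algebra_simps)
lemma hp_const [simp]: "hp X [:c:] = cst c" by (simp add: hp_pCons)
lemma hp_lin: "hp X [:-d, 1:] = X - cst d" by (simp add: hp_pCons cst_uminus)
lemma hp_1 [simp]: "hp X 1 = 1" by (metis hp_const cst_1 one_pCons)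
lemma hp_sum: "hp X (\<Sum>i\<in>A. f i) = (\<Sum>i\<in>A. hp X (f i))"
  by (induction A rule: infinite_finite_induct) (auto simp: hp_add)
lemma hp_prod: "hp X (\<Prod>i\<in>A. f i) = (\<Prod>i\<in>A. hp X (f i))"
  by (induction A rule: infinite_finite_induct) (auto simp: hp_mult)
lemma in_vars_hp: "in_vars n X \<Longrightarrow> in_vars n (hp X q)"
  by (induction q) (simp_all add: hp_pCons in_vars_add in_vars_mult)

locale maxid =
  fixes n :: nat and f :: "complex mpoly" and M :: "complex mpoly set"
  assumes M: "pideal n M" and f: "in_vars n f" and nf: "\<And>m. f ^ m \<notin> M"
    and mx: "\<And>K. pideal n K \<Longrightarrow> M \<subseteq> K \<Longrightarrow> (\<forall>m. f ^ m \<notin> K) \<Longrightarrow> K = M"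
begin

lemma gen:
  assumes a: "in_vars n a" "a \<notin> M"
  shows "\<exists>k m r. m \<in> M \<and> in_vars n r \<and> f ^ k = m + r * a"
proof -
  define K where "K = {m + r * a | m r. m \<in> M \<and> in_vars n r}"
  have MK: "M \<subseteq> K"
  proof
    fix x assume "x \<in> M" then show "x \<in> K" unfolding K_def by (intro CollectI exI[of _ x] exI[of _ 0]) simp
  qed
  have aK: "a \<in> K" unfolding K_def using pidealD(2)[OF M]
    by (intro CollectI exI[of _ 0] exI[of _ 1]) simp
  have "pideal n K"
    unfolding pideal_def
  proof (intro conjI allI impI ballI)
    show "K \<subseteq> {p. in_vars n p}" unfolding K_def
      using pidealD(1)[OF M] a by (auto intro!: in_vars_add in_vars_mult)
    show "0 \<in> K" using MK pidealD(2)[OF M] by blast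
  next
    fix x y assume "x \<in> K" "y \<in> K"
    then obtain m1 r1 m2 r2 where "x = m1 + r1 * a" "y = m2 + r2 * a" "m1 \<in> M" "m2 \<in> M"
      "in_vars n r1" "in_vars n r2" unfolding K_def by blast
    then show "x + y \<in> K" unfolding K_def
      by (intro CollectI exI[of _ "m1 + m2"] exI[of _ "r1 + r2"])
         (auto simp: algebra_simps intro: pidealD(3)[OF M] in_vars_add)
  next
    fix r x assume r: "in_vars n (r::complex mpoly)" and "x \<in> K"
    then obtain m1 r1 where "x = m1 + r1 * a" "m1 \<in> M" "in_vars n r1" unfolding K_def by blast
    moreover have "r * m1 \<in> M" using calculation r pidealD(4)[OF M] by blast
    moreover have "in_vars n (r * r1)" using calculation r in_vars_mult by blast
    moreover have "r * x = r * m1 + (r * r1) * a" using calculation by (simp add: algebra_simps)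
    ultimately show "r * x \<in> K" unfolding K_def by blast
  qed
  moreover have "K \<noteq> M" using aK a by blast
  ultimately have "\<exists>k. f ^ k \<in> K" using mx MK by blast
  then obtain k where "f ^ k \<in> K" by blast
  then obtain m r where "f ^ k = m + r * a" "m \<in> M" "in_vars n r" unfolding K_def by blast
  then show ?thesis by blast
qed

lemma prime:
  assumes "in_vars n a" "in_vars n b" "a * b \<in> M"
  shows "a \<in> M \<or> b \<in> M"
proof (rule ccontr)
  assume "\<not> (a \<in> M \<or> b \<in> M)"
  then obtain k1 m1 r1 k2 m2 r2 where 1: "m1 \<in> M" "in_vars n r1" "f ^ k1 = m1 + r1 * a"
    and 2: "m2 \<in> M" "in_vars n r2" "f ^ k2 = m2 + r2 * b"
    using gen assms by meson
  have "f ^ (k1 + k2) = m1 * (m2 + r2 * b) + m2 * (r1 * a) + (r1 * r2) * (a * b)"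
    by (simp add: power_add 1(3) 2(3) algebra_simps)
  also have "\<dots> \<in> M"
  proof (intro pidealD(3)[OF M])
    show "m1 * (m2 + r2 * b) \<in> M"
      by (rule pideal_mult_right[OF M]) (use 1 2 assms pidealD(1)[OF M] in \<open>auto intro: in_vars_add in_vars_mult\<close>)
    show "m2 * (r1 * a) \<in> M"
      by (rule pideal_mult_right[OF M]) (use 1 2 assms pidealD(1)[OF M] in \<open>auto intro: in_vars_add in_vars_mult\<close>)
    show "r1 * r2 * (a * b) \<in> M"
      by (rule pidealD(4)[OF M]) (use 1 2 assms pidealD(1)[OF M] in \<open>auto intro: in_vars_add in_vars_mult\<close>)
  qed
  finally show False using nf by blast
qed

lemma one_notin: "1 \<notin> M" using nf[of 0] by simp

lemma cst_in: "cst c \<in> M \<Longrightarrow> c = 0"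
proof (rule ccontr)
  assume "cst c \<in> M" "c \<noteq> 0"
  then have "cst (1 / c) * cst c \<in> M" by (intro pidealD(4)[OF M]) auto
  then have "1 \<in> M" using \<open>c \<noteq> 0\<close> by (simp flip: cst_mult)
  then show False using one_notin by blast
qed

lemma univariate_notin:
  assumes i: "i < n" and noc: "\<And>c. var i - cst c \<notin> M"
  shows "q \<noteq> 0 \<Longrightarrow> hp (var i) q \<notin> M"
proof (induction "degree q" arbitrary: q rule: less_induct)
  case less
  show ?case
  proof (cases "degree q = 0")
    case True
    then obtain a where q: "q = [:a:]" by (meson degree_eq_zeroE)
    then have "a \<noteq> 0" using less.prems by auto
    then show ?thesis using q cst_in by auto
  next
    case False
    then obtain d where "poly q d = 0" using alg_closed_imp_poly_has_root by blast
    then have "[:-d, 1:] dvd q" by (simp add: dvd_iff_poly_eq_0)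
    then obtain r where qr: "q = [:-d, 1:] * r" by (elim dvdE)
    then have r0: "r \<noteq> 0" using less.prems by auto
    have "degree q = degree [:-d, 1:] + degree r" unfolding qr by (rule degree_mult_eq) (use r0 in auto)
    then have "degree r < degree q" by simp
    then have "hp (var i) r \<notin> M" using less.hyps r0 by blast
    moreover have "hp (var i) q = (var i - cst d) * hp (var i) r"
      unfolding qr by (simp only: hp_mult hp_lin)
    moreover have "in_vars n (var i - cst d)" using i by (simp add: in_vars_diff in_vars_var)
    moreover have "in_vars n (hp (var i) r)" using i by (simp add: in_vars_hp in_vars_var)
    ultimately show ?thesis using prime noc by metis
  qed
qed

end


lemma lookup_cst_mult: "Poly_Mapping.lookup (cst a * p) k = a * Poly_Mapping.lookup p k"
  by (simp add: cst_def flip: mult_map_scale_conv_mult) (simp add: Poly_Mapping.map.rep_eq when_def)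

lemma keys_empty_zero: "Poly_Mapping.keys (p :: complex mpoly) \<subseteq> {} \<Longrightarrow> p = 0"
  by (rule poly_mapping_eqI) (auto simp: in_keys_iff)

lemma lin_dep:
  fixes v :: "'c \<Rightarrow> complex mpoly"
  assumes "finite F"
  shows "finite B \<Longrightarrow> card F < card B \<Longrightarrow> (\<forall>c\<in>B. Poly_Mapping.keys (v c) \<subseteq> F) \<Longrightarrow>
    \<exists>a. (\<exists>c\<in>B. a c \<noteq> 0) \<and> (\<Sum>c\<in>B. cst (a c) * v c) = 0"
  using assms
proof (induction F arbitrary: B v rule: finite_induct)
  case empty
  then obtain c0 where c0: "c0 \<in> B" by fastforce
  have "\<forall>c\<in>B. v c = 0" using empty.prems keys_empty_zero by blast
  then show ?case using c0
    by (intro exI[of _ "\<lambda>c. if c = c0 then 1 else 0"]) auto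
next
  case (insert \<alpha> F)
  show ?case
  proof (cases "\<forall>c\<in>B. Poly_Mapping.lookup (v c) \<alpha> = 0")
    case True
    then have "\<forall>c\<in>B. Poly_Mapping.keys (v c) \<subseteq> F"
      using insert.prems(3) by (auto simp: in_keys_iff)
    moreover have "card F < card B" using insert by simp
    ultimately show ?thesis using insert.IH insert.prems by blast
  next
    case False
    then obtain c0 where c0: "c0 \<in> B" "Poly_Mapping.lookup (v c0) \<alpha> \<noteq> 0" by blast
    define t where "t c = Poly_Mapping.lookup (v c) \<alpha> / Poly_Mapping.lookup (v c0) \<alpha>" for c
    define w where "w c = v c - cst (t c) * v c0" for c
    define B' where "B' = B - {c0}"
    have fB': "finite B'" using insert.prems by (simp add: B'_def)
    have cB': "card F < card B'" using insert c0 by (simp add: B'_def)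
    have kw: "\<forall>c\<in>B'. Poly_Mapping.keys (w c) \<subseteq> F"
    proof (intro ballI subsetI)
      fix c k assume c: "c \<in> B'" and k: "k \<in> Poly_Mapping.keys (w c)"
      have "Poly_Mapping.lookup (w c) \<alpha> = 0"
        using c0 by (simp add: w_def lookup_minus lookup_cst_mult t_def)
      then have "k \<noteq> \<alpha>" using k by (auto simp: in_keys_iff)
      moreover have "k \<in> Poly_Mapping.keys (v c) \<or> k \<in> Poly_Mapping.keys (v c0)"
        using k by (auto simp: in_keys_iff w_def lookup_minus lookup_cst_mult)
      ultimately show "k \<in> F" using insert.prems(3) c c0 by (auto simp: B'_def)
    qed
    obtain b where b: "\<exists>c\<in>B'. b c \<noteq> 0" "(\<Sum>c\<in>B'. cst (b c) * w c) = 0"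
      using insert.IH[OF fB' cB' kw] by blast
    define a where "a c = (if c = c0 then - (\<Sum>c\<in>B'. b c * t c) else b c)" for c
    have "(\<Sum>c\<in>B. cst (a c) * v c) = cst (a c0) * v c0 + (\<Sum>c\<in>B'. cst (a c) * v c)"
      using c0 insert.prems by (simp add: B'_def sum.remove)
    also have "(\<Sum>c\<in>B'. cst (a c) * v c) = (\<Sum>c\<in>B'. cst (b c) * v c)"
      by (intro sum.cong) (auto simp: a_def B'_def)
    also have "\<dots> = (\<Sum>c\<in>B'. cst (b c) * w c) + (\<Sum>c\<in>B'. cst (b c) * (cst (t c) * v c0))"
      by (simp add: w_def right_diff_distrib sum_subtractf)
    also have "(\<Sum>c\<in>B'. cst (b c) * (cst (t c) * v c0)) = cst (\<Sum>c\<in>B'. b c * t c) * v c0"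
      by (simp add: cst_sum cst_mult sum_distrib_right mult.assoc)
    finally have "(\<Sum>c\<in>B. cst (a c) * v c) = 0"
      using b(2) by (simp add: a_def cst_uminus)
    moreover have "\<exists>c\<in>B. a c \<noteq> 0" using b(1) by (auto simp: a_def B'_def)
    ultimately show ?thesis by blast
  qed
qed


lemma countable_finite_monsets: "countable {S :: (nat \<Rightarrow>\<^sub>0 nat) set. finite S}"
proof (rule countable_image_inj_on)
  have inj: "inj (Poly_Mapping.items :: (nat \<Rightarrow>\<^sub>0 nat) \<Rightarrow> _)"
    by (metis injI the_value_items)
  have "(\<lambda>S. Poly_Mapping.items ` S) ` {S :: (nat \<Rightarrow>\<^sub>0 nat) set. finite S} \<subseteq> Collect finite"
    by auto
  then show "countable ((\<lambda>S. Poly_Mapping.items ` S) ` {S :: (nat \<Rightarrow>\<^sub>0 nat) set. finite S})"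
    using countable_Collect_finite countable_subset by blast
  show "inj_on (\<lambda>S. Poly_Mapping.items ` S) {S :: (nat \<Rightarrow>\<^sub>0 nat) set. finite S}"
  proof (intro inj_onI)
    fix x y :: "(nat \<Rightarrow>\<^sub>0 nat) set" assume "x \<in> {S. finite S}" "y \<in> {S. finite S}"
      "Poly_Mapping.items ` x = Poly_Mapping.items ` y"
    then have "Poly_Mapping.the_value ` Poly_Mapping.items ` x = Poly_Mapping.the_value ` Poly_Mapping.items ` y" by simp
    then show "x = y" by (simp add: image_image)
  qed
qed

lemma uncountable_fibre:
  fixes \<phi> :: "real \<Rightarrow> nat \<times> (nat \<Rightarrow>\<^sub>0 nat) set"
  assumes "\<And>r. finite (snd (\<phi> r))"
  shows "\<exists>y. infinite (\<phi> -` {y})"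
proof (rule ccontr)
  assume "\<not> ?thesis"
  then have fin: "\<And>y. finite (\<phi> -` {y})" by blast
  have "range \<phi> \<subseteq> UNIV \<times> {S. finite S}"
  proof (rule subsetI)
    fix y assume "y \<in> range \<phi>" then obtain r where "y = \<phi> r" by blast
    then show "y \<in> UNIV \<times> {S. finite S}" using assms[of r] by (simp add: mem_Times_iff)
  qed
  moreover have "countable ((UNIV::nat set) \<times> {S :: (nat \<Rightarrow>\<^sub>0 nat) set. finite S})"
    by (intro countable_SIGMA) (simp_all add: countable_finite_monsets)
  ultimately have "countable (range \<phi>)" using countable_subset by blast
  then have "countable (\<Union>y\<in>range \<phi>. \<phi> -` {y})"
    using fin by (intro countable_UN) (auto intro: countable_finite)
  moreover have "(\<Union>y\<in>range \<phi>. \<phi> -` {y}) = UNIV" by auto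
  ultimately show False using uncountable_UNIV_real by simp
qed


context maxid
begin

lemma exists_root:
  assumes i: "i < n"
  shows "\<exists>c. var i - cst c \<in> M"
proof (rule ccontr)
  assume "\<not> ?thesis"
  then have noc: "\<And>c. var i - cst c \<notin> M" by blast
  define X where "X = var i"
  have X: "in_vars n X" using i by (simp add: X_def in_vars_var)
  define Pl where "Pl r = X - cst (of_real r)" for r :: real
  have inPl: "in_vars n (Pl r)" for r using X by (simp add: Pl_def in_vars_diff)
  have "\<forall>r. \<exists>k g. in_vars n g \<and> f ^ k - g * Pl r \<in> M"
  proof
    fix r
    have "Pl r \<notin> M" using noc by (simp add: Pl_def X_def)
    then obtain k m g where "m \<in> M" "in_vars n g" "f ^ k = m + g * Pl r"
      using gen[of "Pl r"] inPl by blast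
    moreover have "f ^ k - g * Pl r = m" using \<open>f ^ k = m + g * Pl r\<close> by simp
    ultimately show "\<exists>k g. in_vars n g \<and> f ^ k - g * Pl r \<in> M" by metis
  qed
  then obtain K G where KG: "\<And>r. in_vars n (G r) \<and> f ^ (K r) - G r * Pl r \<in> M" by metis
  define \<phi> where "\<phi> r = (K r, Poly_Mapping.keys (G r))" for r
  obtain y where "infinite (\<phi> -` {y})" using uncountable_fibre[of \<phi>] by (auto simp: \<phi>_def)
  then obtain k F where inf: "infinite (\<phi> -` {(k, F)})" by (cases y) auto
  then obtain r1 where "r1 \<in> \<phi> -` {(k, F)}" by (metis finite.emptyI ex_in_conv)
  then have fF: "finite F" by (auto simp: \<phi>_def)
  obtain B where B: "B \<subseteq> \<phi> -` {(k, F)}" "finite B" "card B = Suc (card F)"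
    using infinite_arbitrarily_large[OF inf] by blast
  have Bprop: "\<And>r. r \<in> B \<Longrightarrow> K r = k \<and> Poly_Mapping.keys (G r) = F"
    using B(1) by (auto simp: \<phi>_def)
  obtain a where a: "\<exists>c\<in>B. a c \<noteq> 0" "(\<Sum>c\<in>B. cst (a c) * G c) = 0"
    using lin_dep[OF fF B(2), of G] B Bprop by auto
  define P where "P r = (\<Prod>l\<in>B-{r}. Pl l)" for r
  define Q where "Q = (\<Sum>r\<in>B. cst (a r) * P r)"
  have inP: "in_vars n (P r)" for r by (simp add: P_def in_vars_prod inPl)
  have inQ: "in_vars n Q" by (simp add: Q_def in_vars_sum in_vars_mult inP)
  have fk: "in_vars n (f ^ k)" using f by (rule in_vars_power)
  define m where "m r = f ^ k - G r * Pl r" for r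
  have mM: "r \<in> B \<Longrightarrow> m r \<in> M" for r using KG[of r] Bprop[of r] by (simp add: m_def)
  have split: "r \<in> B \<Longrightarrow> (\<Prod>l\<in>B. Pl l) = Pl r * P r" for r
    by (simp add: P_def B(2) prod.remove)
  have "f ^ k * Q = (\<Sum>r\<in>B. cst (a r) * (m r + G r * Pl r) * P r)"
    by (simp add: Q_def m_def sum_distrib_left mult_ac)
  also have "\<dots> = (\<Sum>r\<in>B. (cst (a r) * P r) * m r + cst (a r) * G r * (Pl r * P r))"
    by (simp add: algebra_simps)
  also have "\<dots> = (\<Sum>r\<in>B. (cst (a r) * P r) * m r) + (\<Sum>r\<in>B. cst (a r) * G r * (Pl r * P r))"
    by (simp add: sum.distrib)
  also have "(\<Sum>r\<in>B. cst (a r) * G r * (Pl r * P r)) = (\<Sum>r\<in>B. cst (a r) * G r * (\<Prod>l\<in>B. Pl l))"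
    by (intro sum.cong refl) (simp add: split)
  also have "\<dots> = (\<Sum>r\<in>B. cst (a r) * G r) * (\<Prod>l\<in>B. Pl l)"
    by (simp add: sum_distrib_right)
  also have "\<dots> = 0" using a(2) by simp
  finally have "f ^ k * Q = (\<Sum>r\<in>B. (cst (a r) * P r) * m r)" by simp
  also have "\<dots> \<in> M"
    by (intro pideal_sum[OF M] pidealD(4)[OF M]) (auto simp: mM in_vars_mult inP)
  finally have "f ^ k * Q \<in> M" .
  then have QM: "Q \<in> M" using prime[OF fk inQ] nf by blast
  define q where "q = (\<Sum>r\<in>B. smult (a r) (\<Prod>l\<in>B-{r}. [:- of_real l, 1:]))"
  have Qq: "Q = hp X q" by (simp add: q_def Q_def P_def Pl_def hp_sum hp_smult hp_prod hp_lin)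
  obtain r0 where r0: "r0 \<in> B" "a r0 \<noteq> 0" using a(1) by blast
  have "poly q (of_real r0) = (\<Sum>r\<in>B. if r = r0 then a r0 * (\<Prod>l\<in>B-{r0}. of_real r0 - of_real l) else 0)"
    unfolding q_def poly_sum
  proof (intro sum.cong refl)
    fix r assume r: "r \<in> B"
    show "poly (smult (a r) (\<Prod>l\<in>B-{r}. [:- of_real l, 1:])) (of_real r0) =
      (if r = r0 then a r0 * (\<Prod>l\<in>B-{r0}. of_real r0 - of_real l) else 0)"
    proof (cases "r = r0")
      case True then show ?thesis by (simp add: poly_prod)
    next
      case False
      then have "r0 \<in> B - {r}" using r0 by auto
      then have "(\<Prod>l\<in>B-{r}. poly [:- of_real l, 1:] (complex_of_real r0)) = 0"
        using B(2) by (intro prod_zero) auto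
      then show ?thesis using False by (simp add: poly_prod)
    qed
  qed
  also have "\<dots> = a r0 * (\<Prod>l\<in>B-{r0}. of_real r0 - of_real l)" using r0 B(2) by simp
  also have "\<dots> \<noteq> 0" using r0 B(2) by auto
  finally have "q \<noteq> 0" by auto
  then show False using univariate_notin[OF i noc] QM Qq X_def by blast
qed

end


lemma var_power: "var i ^ k = Poly_Mapping.single (Poly_Mapping.single i k) (1::complex)"
proof (induction k)
  case 0 then show ?case by simp
next
  case (Suc k)
  then show ?case by (simp add: var_def mult_single single_add[symmetric])
qed

lemma prod_single: "(\<Prod>i\<in>A. Poly_Mapping.single (\<beta> i) (1::complex)) =
   Poly_Mapping.single (\<Sum>i\<in>A. \<beta> i) 1"
  by (induction A rule: infinite_finite_induct) (simp_all add: mult_single)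

lemma monomial_prod: "Poly_Mapping.single \<alpha> (1::complex) =
   (\<Prod>i\<in>Poly_Mapping.keys \<alpha>. var i ^ Poly_Mapping.lookup \<alpha> i)"
  by (simp add: var_power prod_single flip: pm_sum_single[OF finite_keys order_refl])

lemma single_cst: "Poly_Mapping.single \<alpha> c = cst c * Poly_Mapping.single \<alpha> (1::complex)"
  by (simp add: cst_def mult_single)

context maxid
begin

lemma cong_mult:
  assumes "a - b \<in> M" "c - d \<in> M" "in_vars n a" "in_vars n b" "in_vars n c" "in_vars n d"
  shows "a * c - b * d \<in> M"
proof -
  have "a * c - b * d = (a - b) * c + b * (c - d)" by (simp add: algebra_simps)
  also have "\<dots> \<in> M" using assms
    by (intro pidealD(3)[OF M] pidealD(4)[OF M] pideal_mult_right[OF M])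
  finally show ?thesis .
qed

lemma cong_power:
  assumes "a - b \<in> M" "in_vars n a" "in_vars n b"
  shows "a ^ k - b ^ k \<in> M"
proof (induction k)
  case 0 then show ?case using pidealD(2)[OF M] by simp
next
  case (Suc k)
  then show ?case using assms cong_mult[of a b "a ^ k" "b ^ k"] by (simp add: in_vars_power)
qed

lemma cong_prod:
  assumes "\<And>i. i \<in> A \<Longrightarrow> g i - h i \<in> M \<and> in_vars n (g i) \<and> in_vars n (h i)"
  shows "(\<Prod>i\<in>A. g i) - (\<Prod>i\<in>A. h i) \<in> M"
  using assms
proof (induction A rule: infinite_finite_induct)
  case (infinite A) then show ?case using pidealD(2)[OF M] by simp
next
  case empty then show ?case using pidealD(2)[OF M] by simp
next
  case (insert x F)
  then show ?case
    by (simp, intro cong_mult) (auto intro: in_vars_prod)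
qed

lemma reduction:
  assumes z: "\<And>j. j < n \<Longrightarrow> var j - cst (z j) \<in> M"
  shows "in_vars n p \<Longrightarrow> p - cst (peval p z) \<in> M"
proof -
  assume p: "in_vars n p"
  have mon: "Poly_Mapping.single \<alpha> 1 - cst (mon \<alpha> z) \<in> M" if "Poly_Mapping.keys \<alpha> \<subseteq> {..<n}" for \<alpha>
  proof -
    have "cst (mon \<alpha> z) = (\<Prod>i\<in>Poly_Mapping.keys \<alpha>. cst (z i) ^ Poly_Mapping.lookup \<alpha> i)"
      by (simp add: mon_def cst_prod cst_power)
    moreover have "(\<Prod>i\<in>Poly_Mapping.keys \<alpha>. var i ^ Poly_Mapping.lookup \<alpha> i) -
        (\<Prod>i\<in>Poly_Mapping.keys \<alpha>. cst (z i) ^ Poly_Mapping.lookup \<alpha> i) \<in> M"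
      using that z by (intro cong_prod) (auto intro!: cong_power in_vars_power in_vars_var)
    ultimately show ?thesis by (simp flip: monomial_prod)
  qed
  have "p - cst (peval p z) = (\<Sum>\<alpha>\<in>Poly_Mapping.keys p. cst (Poly_Mapping.lookup p \<alpha>) *
     (Poly_Mapping.single \<alpha> 1 - cst (mon \<alpha> z)))"
  proof -
    have "p = (\<Sum>\<alpha>\<in>Poly_Mapping.keys p. cst (Poly_Mapping.lookup p \<alpha>) * Poly_Mapping.single \<alpha> 1)"
      by (subst pm_sum_single[OF finite_keys order_refl]) (simp add: single_cst[symmetric])
    moreover have "cst (peval p z) = (\<Sum>\<alpha>\<in>Poly_Mapping.keys p. cst (Poly_Mapping.lookup p \<alpha>) * cst (mon \<alpha> z))"
      by (simp add: peval_mon cst_sum cst_mult)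
    ultimately show ?thesis by (simp add: right_diff_distrib sum_subtractf)
  qed
  also have "\<dots> \<in> M"
    using p by (intro pideal_sum[OF M] pidealD(4)[OF M] mon) (auto simp: in_vars_def[of n p])
  finally show ?thesis .
qed

end

theorem weak_nullstellensatz:
  assumes J: "pideal n J" and f: "in_vars n f" and nf: "\<forall>m. f ^ m \<notin> J"
  shows "\<exists>z\<in>pts n. (\<forall>p\<in>J. peval p z = 0) \<and> peval f z \<noteq> 0"
proof -
  obtain M where MM: "pideal n M" "J \<subseteq> M" "\<forall>m. f ^ m \<notin> M"
    "\<forall>K. pideal n K \<and> M \<subseteq> K \<and> (\<forall>m. f ^ m \<notin> K) \<longrightarrow> K = M"
    using maximal_avoiding[OF J f nf] by blast
  interpret maxid n f M using MM f by unfold_locales blast+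
  have "\<forall>j. \<exists>c. j < n \<longrightarrow> var j - cst c \<in> M" using exists_root by blast
  then obtain c where c: "\<And>j. j < n \<Longrightarrow> var j - cst (c j) \<in> M" by metis
  define z where "z j = (if j < n then c j else 0)" for j
  have zc: "\<And>j. j < n \<Longrightarrow> var j - cst (z j) \<in> M" using c by (simp add: z_def)
  have "z \<in> pts n" by (simp add: pts_def z_def)
  moreover have "peval p z = 0" if "p \<in> J" for p
  proof -
    have "in_vars n p" using that J by (simp add: pidealD(1))
    then have "p - cst (peval p z) \<in> M" using reduction[OF zc] by blast
    moreover have "p \<in> M" using that MM(2) by blast
    ultimately have "cst (peval p z) \<in> M" using pideal_diff[OF MM(1), of p] by force
    then show ?thesis by (rule cst_in)
  qed
  moreover have "peval f z \<noteq> 0"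
  proof
    assume "peval f z = 0"
    then have "f \<in> M" using reduction[OF zc f] by simp
    then show False using MM(3) by (metis power_one_right)
  qed
  ultimately show ?thesis by blast
qed


lemma in_vars_mult_gen: "in_vars n (p::('b::comm_semiring_1) mpoly) \<Longrightarrow> in_vars n q \<Longrightarrow> in_vars n (p * q)"
  unfolding in_vars_iff
proof
  fix m assume p: "Poly_Mapping.keys p \<subseteq> {m. Poly_Mapping.keys m \<subseteq> {..<n}}"
    and q: "Poly_Mapping.keys q \<subseteq> {m. Poly_Mapping.keys m \<subseteq> {..<n}}"
    and m: "m \<in> Poly_Mapping.keys (p * q)"
  then obtain a b where "m = a + b" "a \<in> Poly_Mapping.keys p" "b \<in> Poly_Mapping.keys q"
    using keys_mult[of p q] by blast
  then show "m \<in> {m. Poly_Mapping.keys m \<subseteq> {..<n}}"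
    using p q keys_add[of a b] by blast
qed

lemma in_vars_add_gen: "in_vars n (p::('b::comm_semiring_1) mpoly) \<Longrightarrow> in_vars n q \<Longrightarrow> in_vars n (p + q)"
  unfolding in_vars_iff using keys_add[of p q] by blast

lemma in_vars_zero_gen [simp]: "in_vars n 0" by (simp add: in_vars_def)

lemma in_vars_sum_gen: "(\<And>i. i \<in> A \<Longrightarrow> in_vars n (f i :: ('b::comm_semiring_1) mpoly)) \<Longrightarrow> in_vars n (\<Sum>i\<in>A. f i)"
  by (induction A rule: infinite_finite_induct) (auto intro: in_vars_add_gen)

lemma in_vars_fib: "in_vars n p \<Longrightarrow> in_vars n (fib s p)"
  using keys_fib[of s p] by (auto simp: in_vars_def)

lemma in_vars_restr: "in_vars n p \<Longrightarrow> in_vars n (restr U p)"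
proof -
  have "Poly_Mapping.keys (restr U p) \<subseteq> Poly_Mapping.keys p"
    by (auto simp: restr_def in_keys_iff Poly_Mapping.map.rep_eq when_def)
  then show "in_vars n p \<Longrightarrow> in_vars n (restr U p)" by (auto simp: in_vars_def)
qed

lemma CX_mult:
  fixes p q :: "('a::topological_space \<Rightarrow> complex) mpoly"
  assumes "p \<in> CX n U" "q \<in> CX n U"
  shows "p * q \<in> CX n U"
proof -
  have ip: "in_vars n p" "in_vars n q" using assms by (auto simp: CX_def)
  have lk: "Poly_Mapping.lookup (p * q) k = (\<lambda>t. \<Sum>a\<in>Poly_Mapping.keys p. \<Sum>b\<in>Poly_Mapping.keys q.
      if k = a + b then Poly_Mapping.lookup p a t * Poly_Mapping.lookup q b t else 0)" for k
    by (rule ext, subst lookup_mult_fin[OF finite_keys order_refl finite_keys order_refl])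
       (auto simp: sum_apply intro!: sum.cong)
  have cont: "continuous_on U (Poly_Mapping.lookup p a)" "continuous_on U (Poly_Mapping.lookup q a)" for a
    using assms by (auto simp: CX_def)
  have z: "s \<notin> U \<Longrightarrow> Poly_Mapping.lookup p a s = 0" for s a using assms by (auto simp: CX_def)
  show ?thesis
    unfolding CX_def
  proof (intro CollectI conjI allI impI)
    show "in_vars n (p * q)" using ip by (rule in_vars_mult_gen)
  next
    fix k
    show "continuous_on U (Poly_Mapping.lookup (p * q) k)"
      unfolding lk
    proof (intro continuous_on_sum)
      fix a b
      show "continuous_on U (\<lambda>t. if k = a + b then Poly_Mapping.lookup p a t * Poly_Mapping.lookup q b t else 0)"
        by (cases "k = a + b") (auto intro!: continuous_intros cont)
    qed
  next
    fix k s assume "s \<notin> U"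
    then have "\<And>a b. (if k = a + b then Poly_Mapping.lookup p a s * Poly_Mapping.lookup q b s else 0) = 0"
      using z by simp
    then show "Poly_Mapping.lookup (p * q) k s = 0" unfolding lk by simp
  qed
qed



definition lift :: "'a set \<Rightarrow> complex mpoly \<Rightarrow> ('a \<Rightarrow> complex) mpoly" where
  "lift U q = Poly_Mapping.map (\<lambda>c t. if t \<in> U then c else 0) q"

lemma lookup_lift: "Poly_Mapping.lookup (lift U q) a = (\<lambda>t. if t \<in> U then Poly_Mapping.lookup q a else 0)"
  by (auto simp: lift_def Poly_Mapping.map.rep_eq when_def fun_eq_iff)

lemma lift_CX: "in_vars n q \<Longrightarrow> lift U q \<in> CX n (U :: 'a::topological_space set)"
proof -
  assume q: "in_vars n q"
  have "Poly_Mapping.keys (lift U q) \<subseteq> Poly_Mapping.keys q"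
    by (auto simp: in_keys_iff lookup_lift fun_eq_iff split: if_splits)
  then have "in_vars n (lift U q)" using q by (auto simp: in_vars_def)
  moreover have "continuous_on U (Poly_Mapping.lookup (lift U q) a)" for a
    unfolding lookup_lift by (rule continuous_on_eq[OF continuous_on_const]) auto
  ultimately show ?thesis by (auto simp: CX_def lookup_lift)
qed

lemma fib_lift: "s \<in> U \<Longrightarrow> fib s (lift U q) = q"
  by (rule fib_eqI) (simp add: lookup_lift)



lemma sum_concat: "(\<Sum>i<k1 + (k2::nat). F i) = (\<Sum>i<k1. F i) + (\<Sum>i<k2. F (k1 + i))"
  by (induction k2) (auto simp: add_ac)

lemma ideal_on_0: "0 \<in> ideal_on n I U"
  unfolding ideal_on_def by (intro CollectI exI[of _ 0]) auto

lemma ideal_on_add: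
  assumes "g1 \<in> ideal_on n I U" "g2 \<in> ideal_on n I U"
  shows "g1 + g2 \<in> ideal_on n I U"
proof -
  obtain k1 :: nat and h1 f1 where 1: "\<forall>i<k1. h1 i \<in> CX n U \<and> f1 i \<in> I" "g1 = (\<Sum>i<k1. h1 i * restr U (f1 i))"
    using assms(1) unfolding ideal_on_def by blast
  obtain k2 :: nat and h2 f2 where 2: "\<forall>i<k2. h2 i \<in> CX n U \<and> f2 i \<in> I" "g2 = (\<Sum>i<k2. h2 i * restr U (f2 i))"
    using assms(2) unfolding ideal_on_def by blast
  define h where "h i = (if i < k1 then h1 i else h2 (i - k1))" for i
  define f where "f i = (if i < k1 then f1 i else f2 (i - k1))" for i
  have "\<forall>i<k1 + k2. h i \<in> CX n U \<and> f i \<in> I" using 1 2 by (auto simp: h_def f_def)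
  moreover have "g1 + g2 = (\<Sum>i<k1 + k2. h i * restr U (f i))"
    by (simp add: sum_concat 1 2 h_def f_def)
  ultimately show ?thesis unfolding ideal_on_def
    by (intro CollectI exI[of _ "k1 + k2"] exI[of _ h] exI[of _ f]) simp
qed



lemma ideal_on_mult:
  assumes "Q \<in> CX n U" "g \<in> ideal_on n I U"
  shows "Q * g \<in> ideal_on n I U"
proof -
  obtain k :: nat and h f where 1: "\<forall>i<k. h i \<in> CX n U \<and> f i \<in> I" "g = (\<Sum>i<k. h i * restr U (f i))"
    using assms(2) unfolding ideal_on_def by blast
  have "\<forall>i<k. Q * h i \<in> CX n U \<and> f i \<in> I" using 1 assms(1) by (auto intro: CX_mult)
  moreover have "Q * g = (\<Sum>i<k. (Q * h i) * restr U (f i))"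
    by (simp add: 1 sum_distrib_left mult.assoc)
  ultimately show ?thesis unfolding ideal_on_def
    by (intro CollectI exI[of _ k] exI[of _ "\<lambda>i. Q * h i"] exI[of _ f]) simp
qed



lemma ideal_on_in_vars:
  assumes "is_ideal n I" "g \<in> ideal_on n I U"
  shows "in_vars n g"
proof -
  obtain k :: nat and h f where 1: "\<forall>i<k. h i \<in> CX n U \<and> f i \<in> I" "g = (\<Sum>i<k. h i * restr U (f i))"
    using assms(2) unfolding ideal_on_def by blast
  have IC: "I \<subseteq> CX n UNIV" using assms(1) unfolding is_ideal_def by blast
  have "in_vars n (f i)" if "i < k" for i
  proof -
    have "f i \<in> CX n UNIV" using 1 that IC by blast
    then show ?thesis unfolding CX_def by blast
  qed
  moreover have "in_vars n (h i)" if "i < k" for i using 1 that by (auto simp: CX_def)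
  ultimately show ?thesis unfolding 1
    by (intro in_vars_sum_gen in_vars_mult_gen in_vars_restr) auto
qed



lemma fibre_pideal:
  assumes "is_ideal n I" "s \<in> U"
  shows "pideal n (fib s ` ideal_on n I U)"
  unfolding pideal_def
proof (intro conjI allI impI ballI)
  show "fib s ` ideal_on n I U \<subseteq> {p. in_vars n p}"
  proof
    fix p assume "p \<in> fib s ` ideal_on n I U"
    then obtain g where g: "g \<in> ideal_on n I U" "p = fib s g" by blast
    have "in_vars n g" by (rule ideal_on_in_vars[OF assms(1) g(1)])
    then have "in_vars n (fib s g)" by (rule in_vars_fib)
    then show "p \<in> {p. in_vars n p}" using g(2) by simp
  qed
  show "0 \<in> fib s ` ideal_on n I U"
  proof -
    have "fib s 0 \<in> fib s ` ideal_on n I U" using ideal_on_0 by (rule imageI)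
    then show ?thesis by simp
  qed
next
  fix a b assume "a \<in> fib s ` ideal_on n I U" "b \<in> fib s ` ideal_on n I U"
  then obtain g1 g2 where g: "g1 \<in> ideal_on n I U" "g2 \<in> ideal_on n I U" "a = fib s g1" "b = fib s g2" by blast
  have "fib s (g1 + g2) \<in> fib s ` ideal_on n I U" using ideal_on_add[OF g(1,2)] by (rule imageI)
  then show "a + b \<in> fib s ` ideal_on n I U" using g by (simp add: fib_add)
next
  fix r a assume r: "in_vars n (r::complex mpoly)" and "a \<in> fib s ` ideal_on n I U"
  then obtain g where g: "g \<in> ideal_on n I U" "a = fib s g" by blast
  have "lift U r * g \<in> ideal_on n I U" by (rule ideal_on_mult[OF lift_CX[OF r] g(1)])
  then have "fib s (lift U r * g) \<in> fib s ` ideal_on n I U" by (rule imageI)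
  moreover have "fib s (lift U r * g) = r * a" using assms(2) g(2) by (simp add: fib_mult fib_lift)
  ultimately show "r * a \<in> fib s ` ideal_on n I U" by simp
qed


theorem mainTheorem1:
  fixes I :: "('a::topological_space \<Rightarrow> complex) mpoly set" and n :: nat
  assumes "is_ideal n I"
  shows "\<forall>U. open U \<longrightarrow> IV_on n I U = FRad_on n I U"
proof (intro allI impI)
  fix U :: "'a set" assume "open U"
  show "IV_on n I U = FRad_on n I U"
  proof
    show "IV_on n I U \<subseteq> FRad_on n I U"
    proof
      fix F assume F: "F \<in> IV_on n I U"
      then have FCX: "F \<in> CX n U" and FV: "\<forall>(s, x)\<in>V_on n I U. peval (fib s F) x = 0"
        by (auto simp: IV_on_def)
      have "fib s F \<in> crad (fib s ` ideal_on n I U)" if s: "s \<in> U" for s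
      proof (rule ccontr)
        let ?J = "fib s ` ideal_on n I U"
        assume nc: "fib s F \<notin> crad ?J"
        have J: "pideal n ?J" by (rule fibre_pideal[OF assms s])
        have fv: "in_vars n (fib s F)" using FCX by (auto simp: CX_def intro: in_vars_fib)
        have nf: "\<forall>m. fib s F ^ m \<notin> ?J"
        proof
          fix m show "fib s F ^ m \<notin> ?J"
          proof (cases "m = 0")
            case True
            show ?thesis
            proof
              assume "fib s F ^ m \<in> ?J"
              then have "1 \<in> ?J" using True by simp
              then have "fib s F * 1 \<in> ?J" using pidealD(4)[OF J fv] by blast
              then show False using nc by (auto simp: crad_def intro: exI[of _ 1])
            qed
          next
            case False then show ?thesis using nc by (auto simp: crad_def)
          qed
        qed
        obtain z where z: "z \<in> pts n" "\<forall>p\<in>?J. peval p z = 0" "peval (fib s F) z \<noteq> 0"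
          using weak_nullstellensatz[OF J fv nf] by blast
        have "(s, z) \<in> V_on n I U" using s z by (auto simp: V_on_def)
        then have "peval (fib s F) z = 0" using FV by auto
        then show False using z(3) by simp
      qed
      then show "F \<in> FRad_on n I U" using FCX by (auto simp: FRad_on_def)
    qed
  next
    show "FRad_on n I U \<subseteq> IV_on n I U"
    proof
      fix F assume F: "F \<in> FRad_on n I U"
      then have FCX: "F \<in> CX n U" and FR: "\<forall>s\<in>U. fib s F \<in> crad (fib s ` ideal_on n I U)"
        by (auto simp: FRad_on_def)
      have "peval (fib s F) x = 0" if "(s, x) \<in> V_on n I U" for s x
      proof -
        have s: "s \<in> U" and van: "\<forall>g\<in>ideal_on n I U. peval (fib s g) x = 0"
          using that by (auto simp: V_on_def)
        obtain m g where "m \<ge> 1" "g \<in> ideal_on n I U" "fib s F ^ m = fib s g"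
          using FR s by (auto simp: crad_def)
        then have "peval (fib s F) x ^ m = 0" using van by (metis peval_power)
        then show ?thesis by simp
      qed
      then show "F \<in> IV_on n I U" using FCX by (auto simp: IV_on_def)
    qed
  qed
qed


end
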